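(* For all integers $d\ge2$ and $k\ge1$, if $T$ is chosen uniformly at random from $\mathcal{C}_k^{(d)}$, then the probability that at least $d-1$ of the $d$ children of the root of $T$ are leaves is at least $1/e$.
   Context: A $d$-Catalan tree is a rooted planar tree in which each vertex has $0$ or $d$ children; $\mathcal{C}_k^{(d)}$ is the set of such trees with $k$ internal (non-leaf) vertices. *)

theory Defs
  imports Complex_Main
begin

datatype ptree = Node "ptree list"

fun children :: "ptree \<Rightarrow> ptree list" where
  "children (Node ts) = ts"

definition is_leaf :: "ptree \<Rightarrow> bool" where
  "is_leaf t \<longleftrightarrow> children t = []"

fun dcatalan :: "nat \<Rightarrow> ptree \<Rightarrow> bool" where
  "dcatalan d (Node ts) \<longleftrightarrow> (ts = [] \<or> length ts = d) \<and> (\<forall>t\<in>set ts. dcatalan d t)"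

fun internal :: "ptree \<Rightarrow> nat" where
  "internal (Node ts) = (if ts = [] then 0 else 1 + sum_list (map internal ts))"

definition catalan_trees :: "nat \<Rightarrow> nat \<Rightarrow> ptree set" where
  "catalan_trees d k = {t. dcatalan d t \<and> internal t = k}"

end

theory Submission
  imports Defs
begin

definition forests :: "nat \<Rightarrow> nat \<Rightarrow> nat \<Rightarrow> ptree list set" where
  "forests d m n = {ts. length ts = m \<and> (\<forall>t\<in>set ts. dcatalan d t) \<and> sum_list (map internal ts) = n}"

fun cnt :: "nat \<Rightarrow> nat \<Rightarrow> nat \<Rightarrow> nat" where
  "cnt d 0 n = (if n = 0 then 1 else 0)"
| "cnt d (Suc m) 0 = cnt d m 0"
| "cnt d (Suc m) (Suc n) = cnt d m (Suc n) + cnt d (m+d) n"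

lemma internal0: "internal t = 0 \<longleftrightarrow> t = Node []"
  by (cases t) auto

lemma forests0: "forests d 0 n = (if n = 0 then {[]} else {})"
  by (auto simp: forests_def)

lemma forests_Suc0: "forests d (Suc m) 0 = Cons (Node []) ` forests d m 0"
proof -
  have "ts \<in> Cons (Node []) ` forests d m 0" if "ts \<in> forests d (Suc m) 0" for ts
    using that by (cases ts) (auto simp: forests_def internal0)
  then show ?thesis by (auto simp: forests_def)
qed

lemma sum_take_drop: "sum_list (map f (take d us)) + sum_list (map f (drop d us)) = sum_list (map f us)"
  by (metis append_take_drop_id map_append sum_list_append)

lemma forests_SucSuc:
  assumes "d \<ge> 1"
  shows "forests d (Suc m) (Suc n) = Cons (Node []) ` forests d m (Suc n)
     \<union> (\<lambda>us. Node (take d us) # drop d us) ` forests d (m+d) n"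
proof
  show "forests d (Suc m) (Suc n) \<subseteq> Cons (Node []) ` forests d m (Suc n)
     \<union> (\<lambda>us. Node (take d us) # drop d us) ` forests d (m+d) n"
  proof
    fix ts assume ts: "ts \<in> forests d (Suc m) (Suc n)"
    obtain t rest where tr: "ts = t # rest"
      using ts by (cases ts) (auto simp: forests_def)
    obtain cs where "t = Node cs" by (cases t)
    with tr have tsr: "ts = Node cs # rest" by simp
    show "ts \<in> Cons (Node []) ` forests d m (Suc n)
     \<union> (\<lambda>us. Node (take d us) # drop d us) ` forests d (m+d) n"
    proof (cases "cs = []")
      case True
      then show ?thesis using ts tsr by (auto simp: forests_def)
    next
      case False
      have dc: "dcatalan d (Node cs)" "\<forall>t\<in>set rest. dcatalan d t" "length rest = m"
        "internal (Node cs) + sum_list (map internal rest) = Suc n"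
        using ts tsr by (auto simp: forests_def)
      then have "length cs = d" using False by simp
      moreover have "cs @ rest \<in> forests d (m+d) n" using dc False \<open>length cs = d\<close>
        by (auto simp: forests_def)
      ultimately show ?thesis using tsr by (auto intro!: image_eqI[where x="cs @ rest"])
    qed
  qed
next
  show "Cons (Node []) ` forests d m (Suc n)
     \<union> (\<lambda>us. Node (take d us) # drop d us) ` forests d (m+d) n \<subseteq> forests d (Suc m) (Suc n)"
  proof
    fix ts assume "ts \<in> Cons (Node []) ` forests d m (Suc n)
     \<union> (\<lambda>us. Node (take d us) # drop d us) ` forests d (m+d) n"
    then consider "ts \<in> Cons (Node []) ` forests d m (Suc n)"
      | us where "us \<in> forests d (m+d) n" "ts = Node (take d us) # drop d us" by blast
    then show "ts \<in> forests d (Suc m) (Suc n)"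
    proof cases
      case 1 then show ?thesis by (auto simp: forests_def)
    next
      case 2
      have ne: "take d us \<noteq> []" using 2 assms by (auto simp: forests_def)
      have "length (take d us) = d" using 2 by (auto simp: forests_def)
      moreover have "\<forall>t\<in>set us. dcatalan d t" using 2 by (auto simp: forests_def)
      ultimately show ?thesis using 2 ne sum_take_drop[of internal d us]
        by (auto simp: forests_def dest: in_set_takeD in_set_dropD)
    qed
  qed
qed

lemma forests_card: "d \<ge> 1 \<Longrightarrow> finite (forests d m n) \<and> card (forests d m n) = cnt d m n"
proof (induction d m n rule: cnt.induct)
  case (1 d n) then show ?case by (simp add: forests0)
next
  case (2 d m) then show ?case by (simp add: forests_Suc0 card_image inj_on_def)
next
  case (3 d m n)
  let ?A = "Cons (Node []) ` forests d m (Suc n)"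
  let ?B = "(\<lambda>us. Node (take d us) # drop d us) ` forests d (m+d) n"
  have injB: "inj_on (\<lambda>us. Node (take d us) # drop d us) (forests d (m+d) n)"
  proof (rule inj_onI)
    fix x y assume "Node (take d x) # drop d x = Node (take d y) # drop d y"
    then have "take d x = take d y" "drop d x = drop d y" by auto
    then show "x = y" by (metis append_take_drop_id)
  qed
  have dis: "?A \<inter> ?B = {}"
  proof -
    have "take d us \<noteq> []" if "us \<in> forests d (m+d) n" for us
      using that 3(3) by (auto simp: forests_def)
    then show ?thesis by auto
  qed
  have cA: "card ?A = cnt d m (Suc n)" using 3(1)[OF 3(3)] by (simp add: card_image)
  have cB: "card ?B = cnt d (m+d) n" using 3(2)[OF 3(3)] injB by (simp add: card_image)
  have fA: "finite ?A" "finite ?B" using 3(1)[OF 3(3)] 3(2)[OF 3(3)] by auto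
  show ?case unfolding forests_SucSuc[OF 3(3)] using fA cA cB dis by (simp add: card_Un_disjoint)
qed


definition g :: "nat \<Rightarrow> nat \<Rightarrow> nat \<Rightarrow> int" where
  "g d m n = (if n = 0 then 1 else int ((d*n+m) choose n) - int d * int ((d*n+m-1) choose (n-1)))"

lemma absorb_d: "(d * Suc q) choose Suc q = d * ((d * Suc q - 1) choose q)"
proof -
  have "Suc q * ((d * Suc q) choose Suc q) = (d * Suc q) * ((d * Suc q - 1) choose q)"
    by (rule binomial_absorption)
  also have "\<dots> = Suc q * (d * ((d * Suc q - 1) choose q))" by (simp only: mult.assoc mult.commute mult.left_commute)
  finally show ?thesis using mult_left_cancel[of "Suc q"] by blast
qed

lemma cnt_g: "d \<ge> 1 \<Longrightarrow> int (cnt d m n) = g d m n"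
proof (induction d m n rule: cnt.induct)
  case (1 d n)
  show ?case
  proof (cases n)
    case 0 then show ?thesis by (simp add: g_def)
  next
    case (Suc q)
    then show ?thesis using absorb_d[of d q] by (simp add: g_def)
  qed
next
  case (2 d m) then show ?case by (simp add: g_def)
next
  case (3 d m n)
  have IH1: "int (cnt d m (Suc n)) = g d m (Suc n)" using 3 by simp
  have IH2: "int (cnt d (m+d) n) = g d (m+d) n" using 3 by simp
  show ?case
  proof (cases n)
    case 0
    then show ?thesis using IH1 IH2 by (simp add: g_def)
  next
    case (Suc q)
    define N where "N = d * Suc n + m"
    obtain N' where N': "N = Suc N'" using 3(3) unfolding N_def by (cases "d * Suc n + m") auto
    have e1: "g d (Suc m) (Suc n) = int (Suc N choose Suc n) - int d * int (N choose n)"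
      unfolding g_def N_def by simp
    have e2: "g d m (Suc n) = int (N choose Suc n) - int d * int (N' choose n)"
      unfolding g_def N_def using N' N_def by simp
    have e3: "g d (m+d) n = int (N choose n) - int d * int (N' choose q)"
      unfolding g_def using Suc N' N_def by (simp add: algebra_simps)
    have p1: "Suc N choose Suc n = (N choose n) + (N choose Suc n)" by simp
    have p2: "N choose n = (N' choose q) + (N' choose n)" using N' Suc by simp
    show ?thesis using IH1 IH2 e1 e2 e3 p1 p2 by (simp add: algebra_simps)
  qed
qed


lemma binom_step: "k \<le> n \<Longrightarrow> (Suc n choose k) * (Suc n - k) = Suc n * (n choose k)"
proof -
  assume k: "k \<le> n"
  have s1: "Suc n choose k = Suc n choose Suc (n - k)"
    using binomial_symmetric[of k "Suc n"] k by (simp add: Suc_diff_le)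
  have s2: "n choose k = n choose (n - k)" using binomial_symmetric[OF k] .
  show ?thesis using Suc_times_binomial_eq[of n "n - k"] s1 s2 k by (simp add: Suc_diff_le)
qed

lemma binom_step2: "k < n \<Longrightarrow> Suc k * (n choose Suc k) = (n - k) * (n choose k)"
proof -
  assume k: "k < n"
  then obtain m where m: "n = Suc m" by (cases n) auto
  have "Suc k * (n choose Suc k) = n * (m choose k)" using binomial_absorption[of k n] m by simp
  also have "\<dots> = (n choose k) * (n - k)" using binom_step[of k m] k m by simp
  finally show ?thesis by simp
qed

lemma cnt_closed: "d \<ge> 1 \<Longrightarrow> Suc n * cnt d d n = (d*n+d) choose n"
proof (cases n)
  case 0
  assume "d \<ge> 1"
  then show ?thesis using cnt_g[of d d 0] 0 by (simp add: g_def)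
next
  case (Suc q)
  assume d: "d \<ge> 1"
  define M where "M = d * Suc n"
  have M: "d*n+d = M" unfolding M_def by simp
  have a: "Suc n * (M choose Suc n) = M * ((M - 1) choose n)"
    by (rule binomial_absorption)
  have "int (cnt d d n) = int (M choose n) - int d * int ((M-1) choose q)"
    using cnt_g[OF d, of d n] Suc M by (simp add: g_def)
  moreover have "Suc n * (d * ((M-1) choose q)) = n * (M choose n)"
  proof -
    have "n * (M choose n) = M * ((M-1) choose q)" using binomial_absorption[of q M] Suc by simp
    then show ?thesis unfolding M_def by (simp add: algebra_simps)
  qed
  ultimately have "int (Suc n * cnt d d n) = int (M choose n)"
  proof -
    assume h1: "int (cnt d d n) = int (M choose n) - int d * int ((M-1) choose q)"
      and h2: "Suc n * (d * ((M-1) choose q)) = n * (M choose n)"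
    have h3: "int (Suc n) * (int d * int ((M-1) choose q)) = int n * int (M choose n)"
      using arg_cong[OF h2, of int] unfolding of_nat_mult by simp
    have "int (Suc n * cnt d d n) = int (Suc n) * int (cnt d d n)" by (simp only: of_nat_mult)
    also have "\<dots> = int (Suc n) * int (M choose n) - int n * int (M choose n)"
      using h1 h3 by (simp add: right_diff_distrib)
    also have "\<dots> = int (M choose n)" by (simp add: algebra_simps)
    finally show ?thesis .
  qed
  then have "Suc n * cnt d d n = M choose n" using of_nat_eq_iff by blast
  then show ?thesis using M by simp
qed


lemma chain:
  assumes d: "d \<ge> 2" and N: "d * r \<le> N"
  shows "real (d-1) ^ j * real ((N+j) choose r) \<le> real d ^ j * real (N choose r)"
proof (induction j)
  case 0 then show ?case by simp
next
  case (Suc j)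
  have rle: "r \<le> N + j" proof -
    have "r \<le> d * r" using d by simp
    then show ?thesis using N by linarith
  qed
  have id: "real ((Suc (N+j)) choose r) * real (Suc (N+j) - r) = real (Suc (N+j)) * real ((N+j) choose r)"
    using arg_cong[OF binom_step[OF rle], of real] by (simp only: of_nat_mult)
  have apos: "real (Suc (N+j) - r) > 0" using rle by simp
  have ineq: "real (d-1) * real (Suc (N+j)) \<le> real d * real (Suc (N+j) - r)"
  proof -
    have "real (d * r) \<le> real N" using N by (simp only: of_nat_le_iff)
    then show ?thesis using rle d by (simp add: of_nat_diff algebra_simps)
  qed
  have key: "real (d-1) * real ((Suc (N+j)) choose r) \<le> real d * real ((N+j) choose r)"
  proof -
    have "real (d-1) * real ((Suc (N+j)) choose r) * real (Suc (N+j) - r)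
        = real (d-1) * real (Suc (N+j)) * real ((N+j) choose r)" using id by (simp add: algebra_simps)
    also have "\<dots> \<le> real d * real (Suc (N+j) - r) * real ((N+j) choose r)"
      using ineq by (intro mult_right_mono) auto
    finally have "real (d-1) * real ((Suc (N+j)) choose r) * real (Suc (N+j) - r)
        \<le> real d * real ((N+j) choose r) * real (Suc (N+j) - r)" by (simp add: algebra_simps)
    then show ?thesis using apos by simp
  qed
  have "real (d-1) ^ Suc j * real ((N + Suc j) choose r)
      = real (d-1) ^ j * (real (d-1) * real ((Suc (N+j)) choose r))" by simp
  also have "\<dots> \<le> real (d-1) ^ j * (real d * real ((N+j) choose r))"
    using key by (intro mult_left_mono) auto
  also have "\<dots> = real d * (real (d-1) ^ j * real ((N+j) choose r))" by simp
  also have "\<dots> \<le> real d * (real d ^ j * real (N choose r))"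
    using Suc.IH by (intro mult_left_mono) auto
  also have "\<dots> = real d ^ Suc j * real (N choose r)" by simp
  finally show ?case .
qed

lemma q_le_e:
  assumes "d \<ge> 2"
  shows "(real d / real (d-1)) ^ (d-1) \<le> exp 1"
proof -
  have "real d / real (d-1) = 1 + 1 / real (d-1)" using assms by (simp add: field_simps of_nat_diff)
  also have "\<dots> \<le> exp (1 / real (d-1))" by (rule exp_ge_add_one_self)
  finally have "(real d / real (d-1)) ^ (d-1) \<le> exp (1 / real (d-1)) ^ (d-1)"
    by (intro power_mono) auto
  also have "\<dots> = exp (real (d-1) * (1 / real (d-1)))" by (simp only: exp_of_nat_mult)
  also have "\<dots> = exp 1" using assms by simp
  finally show ?thesis .
qed


lemma ratio:
  assumes d: "d \<ge> 2"
  shows "real (cnt d d (Suc p)) \<le> exp 1 * real d * real (cnt d d p)"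
proof -
  define r where "r = Suc p"
  define N where "N = d * r"
  define c1 where "c1 = real (cnt d d (Suc p))"
  define c0 where "c0 = real (cnt d d p)"
  define X where "X = real ((N+d) choose r)"
  define Y where "Y = real ((N+d-1) choose r)"
  define Z where "Z = real (N choose r)"
  define W where "W = real (N choose p)"
  define q where "q = (real d / real (d-1)) ^ (d-1)"
  have d1: "d \<ge> 1" using d by simp
  have h1: "real (Suc (Suc p)) * c1 = X"
  proof -
    have "Suc (Suc p) * cnt d d (Suc p) = (N+d) choose r"
      using cnt_closed[OF d1, of "Suc p"] unfolding N_def r_def by (simp add: algebra_simps)
    then show ?thesis unfolding c1_def X_def by (metis of_nat_mult)
  qed
  have h0: "real r * c0 = W"
  proof -
    have "Suc p * cnt d d p = N choose p"
      using cnt_closed[OF d1, of p] unfolding N_def r_def by (simp add: algebra_simps)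
    then show ?thesis unfolding c0_def W_def r_def by (metis of_nat_mult)
  qed
  have rN: "r \<le> N" unfolding N_def using d by simp
  have rle: "r \<le> N + d - 1" using rN d by linarith
  have hX: "X * real (N + d - r) = real (N + d) * Y"
  proof -
    have "Suc (N + d - 1) = N + d" using d by simp
    then have "((N+d) choose r) * (N + d - r) = (N + d) * ((N+d-1) choose r)"
      using binom_step[OF rle] by simp
    then show ?thesis unfolding X_def Y_def by (metis of_nat_mult)
  qed
  have hY: "real (d-1) ^ (d-1) * Y \<le> real d ^ (d-1) * Z"
  proof -
    have "N + (d - 1) = N + d - 1" using d by simp
    then show ?thesis using chain[OF d, of r N "d-1"] unfolding Y_def Z_def N_def by simp
  qed
  have pN: "p < N" using rN unfolding r_def by simp
  have hZ: "real r * Z = real (N - p) * W"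
  proof -
    have "r * (N choose r) = (N - p) * (N choose p)" using binom_step2[OF pN] unfolding r_def by simp
    then show ?thesis unfolding Z_def W_def by (metis of_nat_mult)
  qed
  have rpos: "real r > 0" unfolding r_def by simp
  have Zc: "Z = real (N - p) * c0"
  proof -
    have "real r * Z = real r * (real (N - p) * c0)" using hZ h0 by (simp add: algebra_simps)
    then show ?thesis using rpos by simp
  qed
  have dm1pos: "real (d-1) ^ (d-1) > 0" using d by simp
  have Yq: "Y \<le> q * Z"
  proof -
    have "real d ^ (d-1) * Z / real (d-1) ^ (d-1) = q * Z"
      unfolding q_def by (simp add: power_divide)
    moreover have "Y \<le> real d ^ (d-1) * Z / real (d-1) ^ (d-1)"
      using hY dm1pos by (simp add: field_simps)
    ultimately show ?thesis by simp
  qed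
  have Nd: "real (N + d) = real d * real (Suc (Suc p))" unfolding N_def r_def by (simp add: algebra_simps)
  have c1eq: "c1 * real (N + d - r) = real d * Y"
  proof -
    have "real (Suc (Suc p)) * (c1 * real (N + d - r)) = (real (Suc (Suc p)) * c1) * real (N + d - r)"
      by (simp only: mult.assoc)
    also have "\<dots> = X * real (N + d - r)" using h1 by simp
    also have "\<dots> = real (N + d) * Y" using hX .
    also have "\<dots> = real (Suc (Suc p)) * (real d * Y)" using Nd by simp
    finally have "real (Suc (Suc p)) * (c1 * real (N + d - r)) = real (Suc (Suc p)) * (real d * Y)" .
    then show ?thesis by simp
  qed
  have Dpos: "real (N + d - r) > 0" using rle d by simp
  have NpD: "real (N - p) \<le> real (N + d - r)" using d pN unfolding r_def by simp
  have c0nn: "c0 \<ge> 0" unfolding c0_def by simp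
  have qnn: "q \<ge> 0" unfolding q_def by simp
  have "c1 * real (N + d - r) \<le> real d * (q * Z)" using c1eq Yq d by simp
  also have "\<dots> = real d * q * c0 * real (N - p)" using Zc by (simp add: algebra_simps)
  also have "\<dots> \<le> real d * q * c0 * real (N + d - r)"
    using NpD c0nn qnn by (intro mult_left_mono) auto
  finally have "c1 \<le> real d * q * c0" using Dpos by simp
  also have "\<dots> \<le> real d * exp 1 * c0"
    using q_le_e[OF d] c0nn unfolding q_def by (intro mult_right_mono mult_left_mono) auto
  finally show ?thesis unfolding c1_def c0_def by (simp add: algebra_simps)
qed


lemma cat_Suc: "d \<ge> 1 \<Longrightarrow> catalan_trees d (Suc n) = Node ` forests d d n"
proof
  assume d: "d \<ge> 1"
  show "catalan_trees d (Suc n) \<subseteq> Node ` forests d d n"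
  proof
    fix t assume t: "t \<in> catalan_trees d (Suc n)"
    obtain ts where ts: "t = Node ts" by (cases t)
    have ne: "ts \<noteq> []" using t ts by (auto simp: catalan_trees_def)
    then have "ts \<in> forests d d n" using t ts by (auto simp: catalan_trees_def forests_def)
    then show "t \<in> Node ` forests d d n" using ts by blast
  qed
next
  assume d: "d \<ge> 1"
  show "Node ` forests d d n \<subseteq> catalan_trees d (Suc n)"
  proof
    fix t assume "t \<in> Node ` forests d d n"
    then obtain ts where ts: "t = Node ts" "ts \<in> forests d d n" by blast
    then have "ts \<noteq> []" using d by (auto simp: forests_def)
    then show "t \<in> catalan_trees d (Suc n)" using ts by (auto simp: catalan_trees_def forests_def)
  qed
qed

lemma cat_card: "d \<ge> 1 \<Longrightarrow> finite (catalan_trees d (Suc n)) \<and> card (catalan_trees d (Suc n)) = cnt d d n"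
  using forests_card[of d d n] by (simp add: cat_Suc card_image inj_on_def)

lemma cnt_pos: "d \<ge> 1 \<Longrightarrow> cnt d d n > 0"
proof -
  assume d: "d \<ge> 1"
  have "n \<le> d*n" using d by simp
  then have "n \<le> d*n+d" by linarith
  then have "(d*n+d) choose n > 0" by (simp add: zero_less_binomial_iff)
  then show ?thesis using cnt_closed[OF d, of n] by (metis mult_0_right neq0_conv)
qed

lemma rep_inj:
  assumes "replicate i L @ t # xs = replicate j L @ u # ys" "t \<noteq> L" "u \<noteq> L"
  shows "i = j \<and> t = u"
  using assms
proof (induction i arbitrary: j)
  case 0 then show ?case by (cases j) auto
next
  case (Suc i) then show ?case by (cases j) auto
qed

theorem lemma5p2:
  fixes d k :: nat
  assumes "d \<ge> 2" and "k \<ge> 1"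
  shows "real (card {t \<in> catalan_trees d k.
                 length (filter is_leaf (children t)) \<ge> d - 1})
           / real (card (catalan_trees d k)) \<ge> exp (-1)"
proof -
  have d: "d \<ge> 2" by fact
  have d1: "d \<ge> 1" using d by simp
  obtain n where kn: "k = Suc n" using assms(2) by (cases k) auto
  let ?G = "{t \<in> catalan_trees d k. length (filter is_leaf (children t)) \<ge> d - 1}"
  have fin: "finite (catalan_trees d k)" using cat_card[OF d1] kn by simp
  have finG: "finite ?G" using fin by simp
  have allpos: "real (card (catalan_trees d k)) > 0" using cat_card[OF d1, of n] cnt_pos[OF d1, of n] kn by simp
  show ?thesis
  proof (cases n)
    case 0
    have "?G = catalan_trees d k"
    proof (intro set_eqI iffI)
      fix t assume "t \<in> catalan_trees d k"
      then obtain ts where ts: "t = Node ts" "ts \<in> forests d d 0" using cat_Suc[OF d1] kn 0 by blast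
      then have "\<forall>s\<in>set ts. is_leaf s" by (auto simp: forests_def is_leaf_def internal0)
      then have "filter is_leaf ts = ts" by simp
      then show "t \<in> ?G" using \<open>t \<in> catalan_trees d k\<close> ts by (simp add: forests_def)
    qed simp
    then have "real (card ?G) / real (card (catalan_trees d k)) = 1" using allpos by simp
    then show ?thesis by simp
  next
    case (Suc p)
    define L where "L = Node []"
    define f where "f = (\<lambda>(i::nat, t). Node (replicate i L @ t # replicate (d - 1 - i) L))"
    define S where "S = {..<d} \<times> catalan_trees d (Suc p)"
    have Lnot: "t \<noteq> L" if "t \<in> catalan_trees d (Suc p)" for t
      using that by (auto simp: catalan_trees_def L_def)
    have sub: "f ` S \<subseteq> ?G"
    proof
      fix x assume "x \<in> f ` S"
      then obtain i t where it: "i < d" "t \<in> catalan_trees d (Suc p)" "x = f (i, t)"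
        unfolding S_def by blast
      have tL: "\<not> is_leaf t" using Lnot[OF it(2)] by (cases t) (auto simp: is_leaf_def L_def)
      have len: "length (replicate i L @ t # replicate (d - 1 - i) L) = d" using it(1) by simp
      have "dcatalan d x" using it len by (auto simp: f_def L_def catalan_trees_def)
      moreover have "internal x = k" using it kn Suc len
        by (auto simp: f_def L_def catalan_trees_def)
      moreover have "length (filter is_leaf (children x)) \<ge> d - 1"
        using it tL by (simp add: f_def L_def is_leaf_def)
      ultimately show "x \<in> ?G" by (simp add: catalan_trees_def)
    qed
    have inj: "inj_on f S"
    proof (rule inj_onI)
      fix a b assume a: "a \<in> S" and b: "b \<in> S" and e: "f a = f b"
      obtain i t where a': "a = (i, t)" "t \<in> catalan_trees d (Suc p)" using a S_def by auto
      obtain j u where b': "b = (j, u)" "u \<in> catalan_trees d (Suc p)" using b S_def by auto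
      have "replicate i L @ t # replicate (d - 1 - i) L = replicate j L @ u # replicate (d - 1 - j) L"
        using e a' b' by (simp add: f_def)
      then have "i = j \<and> t = u" by (rule rep_inj[OF _ Lnot[OF a'(2)] Lnot[OF b'(2)]])
      then show "a = b" using a' b' by simp
    qed
    have cS: "card S = d * cnt d d p" unfolding S_def using cat_card[OF d1, of p] by (simp add: card_cartesian_product)
    have "d * cnt d d p \<le> card ?G"
      using card_mono[OF finG sub] card_image[OF inj] cS by simp
    then have Gge: "real d * real (cnt d d p) \<le> real (card ?G)" by (metis of_nat_le_iff of_nat_mult)
    have allc: "real (card (catalan_trees d k)) = real (cnt d d (Suc p))" using cat_card[OF d1] kn Suc by simp
    have "exp (-1) * real (card (catalan_trees d k)) \<le> exp (-1) * (exp 1 * real d * real (cnt d d p))"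
      using ratio[OF d, of p] allc by (intro mult_left_mono) auto
    also have "\<dots> = real d * real (cnt d d p)" by (simp add: exp_minus field_simps)
    also have "\<dots> \<le> real (card ?G)" by (rule Gge)
    finally show ?thesis using allpos by (simp add: le_divide_eq)
  qed
qed

end
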